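(* Let $S=\{213,231,312,321\}$, let $t_n$ be the number of rooted labeled trees on $[n]$ avoiding $S$ (with $t_0=0$), and let $T(x)=\sum_{n\ge0}\frac{t_n}{n!}x^n$. Then $T$ satisfies the differential equation $T'=T+e^{T}$ with initial condition $T(0)=0$.
   Context: A rooted labeled tree on $[n]$ is an unordered tree on $n$ vertices with a distinguished root and distinct labels from $[n]$. An instance of a pattern (permutation) $\pi$ of $[k]$ is a sequence of vertices $v_1,\dots,v_k$ with $v_i$ a strict ancestor of $v_{i+1}$ whose labels are in the same relative order as $\pi$; a tree avoids $S$ if it contains no instance of any pattern in $S$. *)

theory Defs
  imports "HOL-Computational_Algebra.Formal_Power_Series"
begin

text \<open>A rooted labeled tree on the vertex set {1..n} is encoded by its parent
function p: p v is the parent of v, p r = 0 for the root r, and p v = 0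
for every v outside {1..n}. Label 0 is never a vertex.\<close>

definition is_rooted_tree :: "nat \<Rightarrow> (nat \<Rightarrow> nat) \<Rightarrow> bool" where
  "is_rooted_tree n p \<longleftrightarrow>
     (\<forall>v. v \<notin> {1..n} \<longrightarrow> p v = 0) \<and>
     (\<forall>v\<in>{1..n}. p v \<in> {0..n}) \<and>
     (\<exists>!r. r \<in> {1..n} \<and> p r = 0) \<and>
     (\<forall>v\<in>{1..n}. \<exists>k. (p ^^ k) v = 0)"

definition strict_ancestor :: "(nat \<Rightarrow> nat) \<Rightarrow> nat \<Rightarrow> nat \<Rightarrow> bool" where
  "strict_ancestor p u v \<longleftrightarrow> u \<noteq> 0 \<and> (\<exists>k\<ge>1. (p ^^ k) v = u)"

text \<open>An instance of pattern \<pi> (a permutation of [k], given as the list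
  [\<pi>(1),...,\<pi>(k)]) is a list of vertices vs = [v_1,...,v_k], v_i a strict
  ancestor of v_(i+1), whose labels are order-isomorphic to \<pi>.\<close>
definition is_instance :: "nat \<Rightarrow> (nat \<Rightarrow> nat) \<Rightarrow> nat list \<Rightarrow> nat list \<Rightarrow> bool" where
  "is_instance n p \<pi> vs \<longleftrightarrow>
     length vs = length \<pi> \<and> set vs \<subseteq> {1..n} \<and>
     (\<forall>i. Suc i < length vs \<longrightarrow> strict_ancestor p (vs ! i) (vs ! Suc i)) \<and>
     (\<forall>i<length vs. \<forall>j<length vs. vs ! i < vs ! j \<longleftrightarrow> \<pi> ! i < \<pi> ! j)"

definition avoids :: "nat \<Rightarrow> (nat \<Rightarrow> nat) \<Rightarrow> nat list set \<Rightarrow> bool" where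
  "avoids n p S \<longleftrightarrow> (\<forall>\<pi>\<in>S. \<not> (\<exists>vs. is_instance n p \<pi> vs))"

definition pattern_set :: "nat list set" where
  "pattern_set = {[2,1,3], [2,3,1], [3,1,2], [3,2,1]}"

definition t_count :: "nat \<Rightarrow> nat" where
  "t_count n = card {p. is_rooted_tree n p \<and> avoids n p pattern_set}"

definition T_egf :: "real fps" where
  "T_egf = Abs_fps (\<lambda>n. of_nat (t_count n) / fact n)"

end

theory Submission
  imports Defs "HOL-Library.FuncSet"
begin


definition forest :: "nat set \<Rightarrow> (nat \<Rightarrow> nat) \<Rightarrow> bool" where
  "forest A p \<longleftrightarrow> (\<forall>v. v \<notin> A \<longrightarrow> p v = 0) \<and> (\<forall>v\<in>A. p v \<in> insert 0 A)
     \<and> (\<forall>v\<in>A. \<exists>k. (p ^^ k) v = 0)"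

definition tree :: "nat set \<Rightarrow> (nat \<Rightarrow> nat) \<Rightarrow> bool" where
  "tree A p \<longleftrightarrow> forest A p \<and> (\<exists>!r. r \<in> A \<and> p r = 0)"

definition valid :: "(nat \<Rightarrow> nat) \<Rightarrow> bool" where
  "valid p \<longleftrightarrow> (\<forall>a b c. strict_ancestor p a b \<and> strict_ancestor p b c \<longrightarrow> a < b \<and> a < c)"

lemma iter_zero: fixes p :: "nat \<Rightarrow> nat" shows "p 0 = 0 \<Longrightarrow> (p ^^ k) 0 = 0"
  by (induction k) auto

lemma iter_add: fixes p :: "nat \<Rightarrow> nat" shows "(p ^^ (i + j)) v = (p ^^ i) ((p ^^ j) v)"
  by (simp add: funpow_add)

lemma iter_Suc2: fixes p :: "nat \<Rightarrow> nat" shows "(p ^^ Suc k) v = (p ^^ k) (p v)"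
  by (simp only: funpow_Suc_right comp_def)

lemma forest_p0: "forest A p \<Longrightarrow> 0 \<notin> A \<Longrightarrow> p 0 = 0"
  unfolding forest_def by blast

lemma forest_iter_in:
  assumes "forest A p" "0 \<notin> A" "v \<in> insert 0 A"
  shows "(p ^^ k) v \<in> insert 0 A"
  using assms(3)
proof (induction k)
  case (Suc k)
  have "(p ^^ Suc k) v = p ((p ^^ k) v)" by simp
  moreover have "\<forall>w \<in> A. p w \<in> insert 0 A" using assms(1) unfolding forest_def by blast
  ultimately show ?case using Suc forest_p0[OF assms(1,2)] by auto
qed simp

lemma forest_outside:
  assumes "forest A p" "0 \<notin> A" "v \<notin> A" "k \<ge> 1"
  shows "(p ^^ k) v = 0"
proof -
  obtain j where k: "k = Suc j" using assms(4) by (cases k) auto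
  have "p v = 0" using assms unfolding forest_def by blast
  then show ?thesis unfolding k iter_Suc2 using iter_zero forest_p0[OF assms(1,2)] by simp
qed

lemma sa_in:
  assumes "forest A p" "0 \<notin> A" "strict_ancestor p u v"
  shows "u \<in> A" "v \<in> A"
proof -
  obtain k where k: "k \<ge> 1" "(p ^^ k) v = u" "u \<noteq> 0"
    using assms(3) unfolding strict_ancestor_def by blast
  show vA: "v \<in> A"
  proof (rule ccontr)
    assume "v \<notin> A"
    from forest_outside[OF assms(1,2) this k(1)] k(2,3) show False by simp
  qed
  have "(p ^^ k) v \<in> insert 0 A" using forest_iter_in[OF assms(1,2)] vA by simp
  then show "u \<in> A" using k(2,3) by simp
qed

lemma sa_trans:
  "strict_ancestor p a b \<Longrightarrow> strict_ancestor p b c \<Longrightarrow> strict_ancestor p a c"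
proof -
  assume "strict_ancestor p a b" "strict_ancestor p b c"
  then obtain i j where "i \<ge> 1" "(p ^^ i) b = a" "a \<noteq> 0" "(p ^^ j) c = b"
    unfolding strict_ancestor_def by blast
  then have "(p ^^ (i + j)) c = a" "i + j \<ge> 1" by (auto simp: iter_add)
  then show ?thesis using \<open>a \<noteq> 0\<close> unfolding strict_ancestor_def by blast
qed

lemma iter_mult: fixes p :: "nat \<Rightarrow> nat" shows "(p ^^ k) v = v \<Longrightarrow> (p ^^ (k * j)) v = v"
proof (induction j)
  case (Suc j)
  then show ?case by (metis iter_add mult_Suc_right)
qed simp

lemma sa_irrefl:
  assumes "forest A p" "0 \<notin> A"
  shows "\<not> strict_ancestor p v v"
proof
  assume a: "strict_ancestor p v v"
  then have vA: "v \<in> A" using sa_in[OF assms] by blast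
  obtain k where k: "k \<ge> 1" "(p ^^ k) v = v" "v \<noteq> 0"
    using a unfolding strict_ancestor_def by blast
  obtain m where m: "(p ^^ m) v = 0" using assms vA unfolding forest_def by blast
  have "(p ^^ (k * m)) v = v" using iter_mult k by blast
  moreover have "k * m = (k * m - m) + m" using k(1) by simp
  then have "(p ^^ (k * m)) v = (p ^^ (k * m - m)) ((p ^^ m) v)" by (metis iter_add)
  then have "(p ^^ (k * m)) v = 0" using m iter_zero forest_p0[OF assms] by simp
  ultimately show False using k by simp
qed

lemma sa_root: fixes p :: "nat \<Rightarrow> nat" shows "p r = 0 \<Longrightarrow> p 0 = 0 \<Longrightarrow> \<not> strict_ancestor p u r"
proof
  assume "p r = 0" "p 0 = 0" "strict_ancestor p u r"
  then obtain k where "k \<ge> 1" "(p ^^ k) r = u" "u \<noteq> 0"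
    unfolding strict_ancestor_def by blast
  then obtain j where "k = Suc j" by (cases k) auto
  then have "(p ^^ k) r = (p ^^ j) (p r)" by (simp only: iter_Suc2)
  then show False using \<open>(p ^^ k) r = u\<close> \<open>u \<noteq> 0\<close> \<open>p r = 0\<close> \<open>p 0 = 0\<close>
    by (simp add: iter_zero)
qed

lemma sa_parent: fixes p :: "nat \<Rightarrow> nat" shows "p v \<noteq> 0 \<Longrightarrow> strict_ancestor p (p v) v"
  unfolding strict_ancestor_def by (rule conjI, simp, rule exI[of _ 1]) simp



definition VT :: "nat set \<Rightarrow> (nat \<Rightarrow> nat) set" where
  "VT A = {p. tree A p \<and> valid p}"
definition VF :: "nat set \<Rightarrow> (nat \<Rightarrow> nat) set" where
  "VF A = {p. forest A p \<and> valid p}"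

lemma tree_iff: "is_rooted_tree n p \<longleftrightarrow> tree {1..n} p"
proof -
  have e: "insert 0 {1..n} = {0..n}" by auto
  show ?thesis unfolding is_rooted_tree_def tree_def forest_def e by blast
qed

lemma all3: "(\<forall>i<3. Q i) \<longleftrightarrow> Q 0 \<and> Q 1 \<and> Q (2::nat)"
proof -
  have "{i. i < (3::nat)} = {0,1,2}" by auto
  then show ?thesis by (metis (mono_tags) insertCI insertE mem_Collect_eq singletonD)
qed

lemma all3S: "(\<forall>i<Suc (Suc (Suc 0)). Q i) \<longleftrightarrow> Q 0 \<and> Q (Suc 0) \<and> Q (Suc (Suc 0))"
  by (auto simp: less_Suc_eq)

lemma all2S: "(\<forall>i<Suc (Suc 0). Q i) \<longleftrightarrow> Q 0 \<and> Q (Suc 0)"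
  by (auto simp: less_Suc_eq)

lemma ex3: "(\<forall>i. Suc i < 3 \<longrightarrow> Q i) \<longleftrightarrow> Q 0 \<and> Q (1::nat)"
proof -
  have "(Suc i < 3) \<longleftrightarrow> i = 0 \<or> i = 1" for i :: nat by auto
  then show ?thesis by auto
qed

lemma inst3:
  assumes "strict_ancestor p a b" "strict_ancestor p b c" "a \<in> {1..n}" "b \<in> {1..n}" "c \<in> {1..n}"
    "a < b \<longleftrightarrow> x < y" "a < c \<longleftrightarrow> x < z" "b < a \<longleftrightarrow> y < x" "b < c \<longleftrightarrow> y < z"
    "c < a \<longleftrightarrow> z < x" "c < b \<longleftrightarrow> z < y"
  shows "is_instance n p [x,y,z] [a,b,c]"
  unfolding is_instance_def
  using assms by (simp add: all3S all2S)

lemma avoids_iff: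
  assumes t: "tree {1..n} p"
  shows "avoids n p pattern_set \<longleftrightarrow> valid p"
proof
  have f: "forest {1..n} p" "0 \<notin> {1..n::nat}" using t unfolding tree_def by auto
  assume av: "avoids n p pattern_set"
  show "valid p" unfolding valid_def
  proof (intro allI impI)
    fix a b c assume h: "strict_ancestor p a b \<and> strict_ancestor p b c"
    then have ab: "strict_ancestor p a b" and bc: "strict_ancestor p b c" by auto
    have ac: "strict_ancestor p a c" using sa_trans[OF ab bc] .
    have ne: "a \<noteq> b" "b \<noteq> c" "a \<noteq> c" using sa_irrefl[OF f] ab bc ac by auto
    have ins: "a \<in> {1..n}" "b \<in> {1..n}" "c \<in> {1..n}" using sa_in[OF f] ab bc by auto
    show "a < b \<and> a < c"
    proof (rule ccontr)
      assume nc: "\<not> (a < b \<and> a < c)"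
      have "\<exists>\<pi>\<in>pattern_set. is_instance n p \<pi> [a,b,c]"
      proof -
        consider "b < a \<and> a < c" | "b < c \<and> c < a" | "c < a \<and> a < b" | "c < b \<and> b < a"
          using nc ne by linarith
        then show ?thesis
        proof cases
          case 1
          then have "is_instance n p [2,1,3] [a,b,c]" using inst3[OF ab bc ins] by auto
          then show ?thesis unfolding pattern_set_def by blast
        next
          case 2
          then have "is_instance n p [3,1,2] [a,b,c]" using inst3[OF ab bc ins] by auto
          then show ?thesis unfolding pattern_set_def by blast
        next
          case 3
          then have "is_instance n p [2,3,1] [a,b,c]" using inst3[OF ab bc ins] by auto
          then show ?thesis unfolding pattern_set_def by blast
        next
          case 4
          then have "is_instance n p [3,2,1] [a,b,c]" using inst3[OF ab bc ins] by auto
          then show ?thesis unfolding pattern_set_def by blast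
        qed
      qed
      then show False using av unfolding avoids_def by blast
    qed
  qed
next
  assume v: "valid p"
  show "avoids n p pattern_set" unfolding avoids_def
  proof (intro ballI notI)
    fix \<pi> assume pi: "\<pi> \<in> pattern_set" and "\<exists>vs. is_instance n p \<pi> vs"
    then obtain vs where inst: "is_instance n p \<pi> vs" by blast
    have l: "length \<pi> = 3" using pi unfolding pattern_set_def by auto
    then have "length vs = 3" using inst unfolding is_instance_def by simp
    then obtain a b c where vs: "vs = [a,b,c]"
      by (metis (no_types) length_0_conv length_Suc_conv numeral_3_eq_3)
    have L: "length vs = 3" by fact
    have SA: "\<forall>i. Suc i < length vs \<longrightarrow> strict_ancestor p (vs ! i) (vs ! Suc i)"
      using inst unfolding is_instance_def by blast
    have H: "\<forall>i<length vs. \<forall>j<length vs. vs ! i < vs ! j \<longleftrightarrow> \<pi> ! i < \<pi> ! j"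
      using inst unfolding is_instance_def by blast
    have "strict_ancestor p (vs ! 0) (vs ! 1)" using SA L by simp
    then have ab: "strict_ancestor p a b" using vs by simp
    have "strict_ancestor p (vs ! 1) (vs ! Suc 1)" using SA[rule_format, of 1] L by simp
    then have bc: "strict_ancestor p b c" using vs by simp
    have lt: "a < b" "a < c" using v ab bc unfolding valid_def by blast+
    have "vs ! 0 < vs ! 1 \<longleftrightarrow> \<pi>!0 < \<pi>!1" using H[rule_format, of 0 1] L by simp
    then have o1: "a < b \<longleftrightarrow> \<pi>!0 < \<pi>!1" using vs by simp
    have "vs ! 0 < vs ! 2 \<longleftrightarrow> \<pi>!0 < \<pi>!2" using H[rule_format, of 0 2] L by simp
    then have o2: "a < c \<longleftrightarrow> \<pi>!0 < \<pi>!2" using vs by simp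
    from pi have "\<pi> = [2,1,3] \<or> \<pi> = [2,3,1] \<or> \<pi> = [3,1,2] \<or> \<pi> = [3,2,1]"
      unfolding pattern_set_def by blast
    then show False using lt o1 o2 by auto
  qed
qed

lemma t_count_VT: "t_count n = card (VT {1..n})"
proof -
  have "{p. is_rooted_tree n p \<and> avoids n p pattern_set} = VT {1..n}"
    unfolding VT_def using tree_iff avoids_iff by blast
  then show ?thesis unfolding t_count_def by simp
qed



lemma forest_supp: "forest A p \<Longrightarrow> v \<notin> A \<Longrightarrow> p v = 0"
  unfolding forest_def by blast
lemma forest_val: "forest A p \<Longrightarrow> v \<in> A \<Longrightarrow> p v \<in> insert 0 A"
  unfolding forest_def by blast
lemma forest_reach: "forest A p \<Longrightarrow> v \<in> A \<Longrightarrow> \<exists>k. (p ^^ k) v = 0"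
  unfolding forest_def by blast
lemma forestI:
  assumes "\<And>v. v \<notin> A \<Longrightarrow> p v = 0" "\<And>v. v \<in> A \<Longrightarrow> p v \<in> insert 0 A"
    "\<And>v. v \<in> A \<Longrightarrow> \<exists>k. (p ^^ k) v = 0"
  shows "forest A p"
  unfolding forest_def using assms by blast

lemma finite_forests:
  assumes "finite A"
  shows "finite {p. forest A p}"
proof -
  let ?f = "\<lambda>p. restrict p A"
  have "?f ` {p. forest A p} \<subseteq> PiE A (\<lambda>_. insert 0 A)"
  proof
    fix q assume "q \<in> ?f ` {p. forest A p}"
    then obtain p where "forest A p" "q = ?f p" by blast
    then show "q \<in> PiE A (\<lambda>_. insert 0 A)" using forest_val[of A p] by auto
  qed
  moreover have "finite (PiE A (\<lambda>_. insert 0 A))" using assms by (intro finite_PiE) auto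
  ultimately have "finite (?f ` {p. forest A p})" by (rule finite_subset)
  moreover have "inj_on ?f {p. forest A p}"
  proof (rule inj_onI)
    fix p q assume "p \<in> {p. forest A p}" "q \<in> {p. forest A p}" "?f p = ?f q"
    show "p = q"
    proof
      fix v show "p v = q v"
      proof (cases "v \<in> A")
        case True then show ?thesis using \<open>?f p = ?f q\<close> by (metis restrict_apply')
      next
        case False
        have "forest A p" "forest A q" using \<open>p \<in> _\<close> \<open>q \<in> _\<close> by auto
        then show ?thesis using forest_supp[OF _ False] by metis
      qed
    qed
  qed
  ultimately show ?thesis using finite_imageD by blast
qed

lemma finite_VF: "finite A \<Longrightarrow> finite (VF A)"
  unfolding VF_def by (rule finite_subset[OF _ finite_forests]) auto
lemma finite_VT: "finite A \<Longrightarrow> finite (VT A)"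
  unfolding VT_def tree_def by (rule finite_subset[OF _ finite_forests]) auto

section \<open>Transport along monotone bijections\<close>

locale relab =
  fixes h :: "nat \<Rightarrow> nat" and A B :: "nat set"
  assumes bij: "bij_betw h A B" and mono: "\<And>x y. x \<in> A \<Longrightarrow> y \<in> A \<Longrightarrow> x < y \<Longrightarrow> h x < h y"
    and A0: "0 \<notin> A" and B0: "0 \<notin> B"
begin

definition H :: "nat \<Rightarrow> nat" where "H v = (if v \<in> A then h v else 0)"
definition g :: "nat \<Rightarrow> nat" where "g = the_inv_into A h"
definition cj :: "(nat \<Rightarrow> nat) \<Rightarrow> nat \<Rightarrow> nat" where
  "cj p = (\<lambda>w. if w \<in> B then H (p (g w)) else 0)"

lemma inj: "inj_on h A" using bij by (rule bij_betw_imp_inj_on)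
lemma hB: "v \<in> A \<Longrightarrow> h v \<in> B" using bij by (rule bij_betw_apply)
lemma gh: "v \<in> A \<Longrightarrow> g (h v) = v" unfolding g_def using the_inv_into_f_f[OF inj] .
lemma gA: "w \<in> B \<Longrightarrow> g w \<in> A"
  unfolding g_def using bij_betw_the_inv_into[OF bij] by (rule bij_betw_apply)
lemma hg: "w \<in> B \<Longrightarrow> h (g w) = w"
  unfolding g_def using f_the_inv_into_f[OF inj] bij_betw_imp_surj_on[OF bij] by simp
lemma H0: "H 0 = 0" unfolding H_def using A0 by simp
lemma HA: "v \<in> A \<Longrightarrow> H v = h v" unfolding H_def by simp
lemma H_in: "v \<in> insert 0 A \<Longrightarrow> H v \<in> insert 0 B"
  by (cases "v = 0") (auto simp: H0 HA hB)
lemma H_eq0: "v \<in> insert 0 A \<Longrightarrow> H v = 0 \<longleftrightarrow> v = 0"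
proof (cases "v = 0")
  case False
  assume "v \<in> insert 0 A"
  then have "v \<in> A" using False by simp
  then show ?thesis using HA hB B0 False by (metis)
qed (simp add: H0)
lemma H_inj: "x \<in> insert 0 A \<Longrightarrow> y \<in> insert 0 A \<Longrightarrow> H x = H y \<Longrightarrow> x = y"
proof -
  assume x: "x \<in> insert 0 A" and y: "y \<in> insert 0 A" and e: "H x = H y"
  show "x = y"
  proof (cases "x = 0")
    case True then have "H y = 0" using e H0 by simp
    then show ?thesis using H_eq0[OF y] True by simp
  next
    case False
    then have "H x \<noteq> 0" using H_eq0[OF x] by simp
    then have "y \<noteq> 0" using e H0 by (metis)
    then have "x \<in> A" "y \<in> A" using False x y by auto
    then have "h x = h y" using e HA by simp
    then show ?thesis using inj \<open>x \<in> A\<close> \<open>y \<in> A\<close> by (simp add: inj_on_eq_iff)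
  qed
qed

lemma cj_at: "v \<in> A \<Longrightarrow> cj p (h v) = H (p v)"
  unfolding cj_def using hB gh by simp
lemma cj0: "cj p 0 = 0" unfolding cj_def using B0 by simp

lemma cj_iter:
  assumes f: "forest A p" and v: "v \<in> insert 0 A"
  shows "(cj p ^^ k) (H v) = H ((p ^^ k) v)"
proof (induction k)
  case (Suc k)
  have x: "(p ^^ k) v \<in> insert 0 A" using forest_iter_in[OF f A0 v] .
  have "(cj p ^^ Suc k) (H v) = cj p (H ((p ^^ k) v))" using Suc by simp
  also have "\<dots> = H (p ((p ^^ k) v))"
  proof (cases "(p ^^ k) v = 0")
    case True then show ?thesis using H0 cj0 forest_p0[OF f A0] by simp
  next
    case False then show ?thesis using x HA cj_at by auto
  qed
  finally show ?case by simp
qed simp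

lemma cj_forest:
  assumes f: "forest A p"
  shows "forest B (cj p)"
proof (rule forestI)
  fix w assume "w \<notin> B" then show "cj p w = 0" unfolding cj_def by simp
next
  fix w assume w: "w \<in> B"
  then have "cj p w = H (p (g w))" unfolding cj_def by simp
  moreover have "p (g w) \<in> insert 0 A" using forest_val[OF f gA[OF w]] .
  ultimately show "cj p w \<in> insert 0 B" using H_in by simp
next
  fix w assume w: "w \<in> B"
  obtain k where k: "(p ^^ k) (g w) = 0" using forest_reach[OF f gA[OF w]] by blast
  have "(cj p ^^ k) (H (g w)) = H ((p ^^ k) (g w))" using cj_iter[OF f] gA[OF w] by simp
  moreover have "H (g w) = w" using HA gA hg w by simp
  ultimately show "\<exists>k. (cj p ^^ k) w = 0" using k H0 by metis
qed

lemma cj_sa: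
  assumes f: "forest A p" and s: "strict_ancestor (cj p) u' w"
  shows "\<exists>u v. u \<in> A \<and> v \<in> A \<and> u' = h u \<and> w = h v \<and> strict_ancestor p u v"
proof -
  have w: "w \<in> B" using sa_in[OF cj_forest[OF f] B0 s] by simp
  obtain k where k: "k \<ge> 1" "(cj p ^^ k) w = u'" "u' \<noteq> 0"
    using s unfolding strict_ancestor_def by blast
  define v where "v = g w"
  have v: "v \<in> A" "w = h v" "H v = w" using w gA hg HA v_def by auto
  have x: "(p ^^ k) v \<in> insert 0 A" using forest_iter_in[OF f A0] v by simp
  have "H ((p ^^ k) v) = u'" using cj_iter[OF f, of v k] v k by simp
  then have "(p ^^ k) v \<noteq> 0" using H0 k(3) by metis
  then have xA: "(p ^^ k) v \<in> A" using x by simp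
  have "u' = h ((p ^^ k) v)" using \<open>H ((p ^^ k) v) = u'\<close> HA xA by simp
  moreover have "strict_ancestor p ((p ^^ k) v) v"
    unfolding strict_ancestor_def using k \<open>(p ^^ k) v \<noteq> 0\<close> by blast
  ultimately show ?thesis using v xA by blast
qed

lemma cj_valid:
  assumes f: "forest A p" and val: "valid p"
  shows "valid (cj p)"
  unfolding valid_def
proof (intro allI impI)
  fix a' b' c' assume "strict_ancestor (cj p) a' b' \<and> strict_ancestor (cj p) b' c'"
  then have s1: "strict_ancestor (cj p) a' b'" and s2: "strict_ancestor (cj p) b' c'" by auto
  obtain a1 b1 where 1: "a1 \<in> A" "b1 \<in> A" "a' = h a1" "b' = h b1" "strict_ancestor p a1 b1"
    using cj_sa[OF f s1] by blast
  obtain b2 c2 where 2: "b2 \<in> A" "c2 \<in> A" "b' = h b2" "c' = h c2" "strict_ancestor p b2 c2"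
    using cj_sa[OF f s2] by blast
  have "b1 = b2" using 1 2 inj inj_on_def by metis
  then have "a1 < b1 \<and> a1 < c2" using val 1 2 unfolding valid_def by blast
  then show "a' < b' \<and> a' < c'" using mono 1 2 by auto
qed

lemma cj_tree:
  assumes t: "tree A p"
  shows "tree B (cj p)"
proof -
  have f: "forest A p" using t unfolding tree_def by simp
  have ex: "\<exists>!r. r \<in> A \<and> p r = 0" using t unfolding tree_def by simp
  then obtain r where r1: "r \<in> A" and r2: "p r = 0" by auto
  have r3: "r' = r" if "r' \<in> A" "p r' = 0" for r' using ex r1 r2 that by auto
  have 1: "h r \<in> B" using r1 hB by simp
  have 2: "cj p (h r) = 0" using cj_at[OF r1] r2 H0 by simp
  have 3: "r' = h r" if "r' \<in> B" "cj p r' = 0" for r'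
  proof -
    have "cj p r' = H (p (g r'))" using that(1) unfolding cj_def by simp
    then have "H (p (g r')) = 0" using that(2) by simp
    moreover have "p (g r') \<in> insert 0 A" using forest_val[OF f gA[OF that(1)]] .
    ultimately have "p (g r') = 0" using H_eq0 by simp
    then have "g r' = r" using r3 gA[OF that(1)] by simp
    then show ?thesis using hg[OF that(1)] by simp
  qed
  have "\<exists>!r. r \<in> B \<and> cj p r = 0"
  proof (rule ex1I[of _ "h r"])
    show "h r \<in> B \<and> cj p (h r) = 0" using 1 2 by simp
    fix r' assume "r' \<in> B \<and> cj p r' = 0"
    then show "r' = h r" using 3 by blast
  qed
  then show ?thesis unfolding tree_def using cj_forest[OF f] by simp
qed

lemma cj_inj: "inj_on cj {p. forest A p}"
proof (rule inj_onI)
  fix p q assume p: "p \<in> {p. forest A p}" and q: "q \<in> {p. forest A p}" and e: "cj p = cj q"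
  show "p = q"
  proof
    fix v show "p v = q v"
    proof (cases "v \<in> A")
      case True
      have "H (p v) = H (q v)" using e cj_at[OF True, of p] cj_at[OF True, of q] by simp
      moreover have "p v \<in> insert 0 A" "q v \<in> insert 0 A"
        using forest_val[OF _ True] p q by auto
      ultimately show ?thesis using H_inj by blast
    next
      case False
      have "forest A p" "forest A q" using p q by auto
      then show ?thesis using forest_supp[OF _ False] by metis
    qed
  qed
qed

lemma le_VT: "finite B \<Longrightarrow> card (VT A) \<le> card (VT B)"
proof (rule card_inj_on_le[of cj])
  show "inj_on cj (VT A)" by (rule inj_on_subset[OF cj_inj]) (auto simp: VT_def tree_def)
  show "cj ` VT A \<subseteq> VT B" using cj_tree cj_valid unfolding VT_def tree_def by blast
qed (rule finite_VT)

lemma le_VF: "finite B \<Longrightarrow> card (VF A) \<le> card (VF B)"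
proof (rule card_inj_on_le[of cj])
  show "inj_on cj (VF A)" by (rule inj_on_subset[OF cj_inj]) (auto simp: VF_def)
  show "cj ` VF A \<subseteq> VF B" using cj_forest cj_valid unfolding VF_def by blast
qed (rule finite_VF)

lemma inv_transp: "relab g B A"
proof (rule relab.intro)
  show "bij_betw g B A" unfolding g_def using bij_betw_the_inv_into[OF bij] .
  show "0 \<notin> B" by (rule B0)
  show "0 \<notin> A" by (rule A0)
  fix x y assume x: "x \<in> B" and y: "y \<in> B" and xy: "x < y"
  have gx: "g x \<in> A" and gy: "g y \<in> A" using gA x y by auto
  show "g x < g y"
  proof (rule ccontr)
    assume "\<not> g x < g y"
    then have "g y \<le> g x" by simp
    then have "h (g y) \<le> h (g x)"
      using mono[OF gy gx] by (cases "g y = g x") auto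
    then show False using hg[OF x] hg[OF y] xy by simp
  qed
qed

lemma eq_VT: "finite A \<Longrightarrow> card (VT A) = card (VT B)"
proof -
  assume fA: "finite A"
  have fB: "finite B" using bij fA bij_betw_finite by blast
  show ?thesis using le_VT[OF fB] relab.le_VT[OF inv_transp fA] by simp
qed

lemma eq_VF: "finite A \<Longrightarrow> card (VF A) = card (VF B)"
proof -
  assume fA: "finite A"
  have fB: "finite B" using bij fA bij_betw_finite by blast
  show ?thesis using le_VF[OF fB] relab.le_VF[OF inv_transp fA] by simp
qed

end

definition f_count :: "nat \<Rightarrow> nat" where "f_count n = card (VF {1..n})"

lemma std_transp:
  assumes fA: "finite A" and A0: "0 \<notin> A"
  shows "relab (\<lambda>i. sorted_list_of_set A ! (i - 1)) {1..card A} A"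
proof -
  define xs where "xs = sorted_list_of_set A"
  have len: "length xs = card A" unfolding xs_def by simp
  have setxs: "set xs = A" unfolding xs_def using fA by simp
  have dist: "distinct xs" unfolding xs_def by simp
  have ss: "sorted_wrt (<) xs" unfolding xs_def by (rule strict_sorted_list_of_set)
  have b1: "bij_betw (\<lambda>i. i - 1) {1..card A} {..<card A}"
  proof (rule bij_betw_byWitness[where f'="\<lambda>i. i + 1"])
    show "\<forall>a\<in>{1..card A}. a - 1 + 1 = a" by simp
    show "\<forall>a'\<in>{..<card A}. a' + 1 - 1 = a'" by simp
    show "(\<lambda>i. i - 1) ` {1..card A} \<subseteq> {..<card A}" by auto
    show "(\<lambda>i. i + 1) ` {..<card A} \<subseteq> {1..card A}" by auto
  qed
  have b2: "bij_betw ((!) xs) {..<card A} A"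
    by (rule bij_betw_nth[OF dist]) (simp_all add: len setxs)
  have "relab (\<lambda>i. xs ! (i - 1)) {1..card A} A"
  proof
    show "bij_betw (\<lambda>i. xs ! (i - 1)) {1..card A} A"
      using bij_betw_trans[OF b1 b2] by (simp add: comp_def)
    fix x y assume x: "x \<in> {1..card A}" and y: "y \<in> {1..card A}" and xy: "x < y"
    have "x - 1 < y - 1" "y - 1 < length xs" using x y xy len by auto
    then show "xs ! (x - 1) < xs ! (y - 1)"
      using sorted_wrt_nth_less[OF ss] by blast
  next
    show "0 \<notin> {1..card A}" by simp
    show "0 \<notin> A" by fact
  qed
  then show ?thesis unfolding xs_def .
qed

lemma VT_card: "finite A \<Longrightarrow> 0 \<notin> A \<Longrightarrow> card (VT A) = t_count (card A)"
  using relab.eq_VT[OF std_transp] t_count_VT by simp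

lemma VF_card: "finite A \<Longrightarrow> 0 \<notin> A \<Longrightarrow> card (VF A) = f_count (card A)"
  using relab.eq_VF[OF std_transp] f_count_def by simp



lemma sa_step:
  fixes p :: "nat \<Rightarrow> nat"
  assumes "strict_ancestor p u v"
  shows "u = p v \<or> strict_ancestor p u (p v)"
proof -
  obtain k where k: "k \<ge> 1" "(p ^^ k) v = u" "u \<noteq> 0"
    using assms unfolding strict_ancestor_def by blast
  then obtain j where j: "k = Suc j" by (cases k) auto
  have "(p ^^ j) (p v) = u" using k(2) unfolding j iter_Suc2 .
  show ?thesis
  proof (cases j)
    case 0 then show ?thesis using \<open>(p ^^ j) (p v) = u\<close> by simp
  next
    case (Suc i)
    then have "j \<ge> 1" by simp
    then show ?thesis using \<open>(p ^^ j) (p v) = u\<close> k(3) unfolding strict_ancestor_def by blast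
  qed
qed

lemma fsuc: "(f ^^ Suc k) x = f ((f ^^ k) x)" by simp

lemma iter_upd_avoid:
  fixes q :: "nat \<Rightarrow> nat"
  assumes nm: "\<And>x. q x \<noteq> m" and v: "v \<noteq> m"
  shows "((q(m := c)) ^^ k) v = (q ^^ k) v"
proof (induction k)
  case (Suc k)
  have ne: "(q ^^ k) v \<noteq> m"
  proof (cases k)
    case 0 then show ?thesis using v by simp
  next
    case (Suc j) then show ?thesis using nm by simp
  qed
  have "((q(m := c)) ^^ Suc k) v = (q(m := c)) ((q ^^ k) v)" by (simp only: fsuc Suc.IH)
  also have "\<dots> = q ((q ^^ k) v)" using ne by simp
  also have "\<dots> = (q ^^ Suc k) v" by (simp only: fsuc)
  finally show ?case .
qed simp

lemma sa_upd_avoid: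
  fixes q :: "nat \<Rightarrow> nat"
  assumes nm: "\<And>x. q x \<noteq> m" and v: "v \<noteq> m"
  shows "strict_ancestor (q(m := c)) u v \<longleftrightarrow> strict_ancestor q u v"
  unfolding strict_ancestor_def using iter_upd_avoid[OF nm v] by simp

definition phi :: "nat \<Rightarrow> (nat \<Rightarrow> nat) \<Rightarrow> nat \<Rightarrow> nat" where
  "phi m p = (\<lambda>v. if p v = m then 0 else p v)"

lemma iter_phi:
  fixes p :: "nat \<Rightarrow> nat"
  assumes p0: "p 0 = 0" and pm: "p m = 0" and v: "v \<noteq> m"
  shows "(phi m p ^^ k) v = (if (p ^^ k) v = m then 0 else (p ^^ k) v)"
proof (induction k)
  case 0 then show ?case using v by simp
next
  case (Suc k)
  show ?case
  proof (cases "(p ^^ k) v = m")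
    case True
    then have "(phi m p ^^ k) v = 0" using Suc by simp
    then have "(phi m p ^^ Suc k) v = phi m p 0" by simp
    also have "\<dots> = 0" unfolding phi_def using p0 by simp
    finally have l: "(phi m p ^^ Suc k) v = 0" .
    have "(p ^^ Suc k) v = 0" using True pm by simp
    then show ?thesis using l by simp
  next
    case False
    then have "(phi m p ^^ k) v = (p ^^ k) v" using Suc by simp
    then have "(phi m p ^^ Suc k) v = phi m p ((p ^^ k) v)" by simp
    then show ?thesis unfolding phi_def by simp
  qed
qed

lemma sa_phi:
  fixes p :: "nat \<Rightarrow> nat"
  assumes p0: "p 0 = 0" and pm: "p m = 0"
  shows "strict_ancestor (phi m p) u v \<longleftrightarrow> strict_ancestor p u v \<and> u \<noteq> m"
proof (cases "v = m")
  case True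
  have "phi m p m = 0" unfolding phi_def using pm by simp
  moreover have "phi m p 0 = 0" unfolding phi_def using p0 by simp
  ultimately have "\<not> strict_ancestor (phi m p) u v" using sa_root True by metis
  moreover have "\<not> strict_ancestor p u v" using sa_root[of p m u, OF pm p0] True by simp
  ultimately show ?thesis by simp
next
  case False
  note it = iter_phi[OF p0 pm False]
  show ?thesis
  proof
    assume "strict_ancestor (phi m p) u v"
    then obtain k where k: "k \<ge> 1" "(phi m p ^^ k) v = u" "u \<noteq> 0"
      unfolding strict_ancestor_def by blast
    then have "(p ^^ k) v \<noteq> m" using it by (metis)
    then have "(p ^^ k) v = u" using k it by simp
    then show "strict_ancestor p u v \<and> u \<noteq> m"
      unfolding strict_ancestor_def using k \<open>(p ^^ k) v \<noteq> m\<close> by blast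
  next
    assume "strict_ancestor p u v \<and> u \<noteq> m"
    then obtain k where k: "k \<ge> 1" "(p ^^ k) v = u" "u \<noteq> 0" "u \<noteq> m"
      unfolding strict_ancestor_def by blast
    then have "(phi m p ^^ k) v = u" using it by simp
    then show "strict_ancestor (phi m p) u v" unfolding strict_ancestor_def using k by blast
  qed
qed


lemma tree_forest: "tree A p \<Longrightarrow> forest A p" unfolding tree_def by simp
lemma tree_root_unique: "tree A p \<Longrightarrow> r \<in> A \<Longrightarrow> p r = 0 \<Longrightarrow> r' \<in> A \<Longrightarrow> p r' = 0 \<Longrightarrow> r = r'"
  unfolding tree_def by blast
lemma treeI: "forest A p \<Longrightarrow> r \<in> A \<Longrightarrow> p r = 0 \<Longrightarrow> (\<And>r'. r' \<in> A \<Longrightarrow> p r' = 0 \<Longrightarrow> r' = r) \<Longrightarrow> tree A p"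
  unfolding tree_def by blast
lemma validD: "valid p \<Longrightarrow> strict_ancestor p a b \<Longrightarrow> strict_ancestor p b c \<Longrightarrow> a < b \<and> a < c"
  unfolding valid_def by blast
lemma validI: "(\<And>a b c. strict_ancestor p a b \<Longrightarrow> strict_ancestor p b c \<Longrightarrow> a < b \<and> a < c) \<Longrightarrow> valid p"
  unfolding valid_def by blast

locale rec1 =
  fixes A :: "nat set" and m :: nat
  assumes fin: "finite A" and A0: "0 \<notin> A" and mA: "m \<in> A" and mmin: "\<And>x. x \<in> A \<Longrightarrow> m \<le> x"
begin

lemma m0: "m \<noteq> 0"
proof
  assume "m = 0" then show False using mA A0 by simp
qed
lemma A'0: "0 \<notin> A - {m}" using A0 by simp

definition psi :: "(nat \<Rightarrow> nat) \<Rightarrow> nat \<Rightarrow> nat" where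
  "psi q = (\<lambda>v. if v \<in> A - {m} \<and> q v = 0 then m else q v)"

lemma phi_to:
  assumes t: "tree A p" and v: "valid p" and pm: "p m = 0"
  shows "forest (A - {m}) (phi m p) \<and> valid (phi m p)"
proof
  have f: "forest A p" using tree_forest[OF t] .
  have p0: "p 0 = 0" using forest_p0[OF f A0] .
  show "forest (A - {m}) (phi m p)"
  proof (rule forestI)
    fix x assume x: "x \<notin> A - {m}"
    show "phi m p x = 0"
    proof (cases "x = m")
      case True then show ?thesis unfolding phi_def using pm by simp
    next
      case False then have "x \<notin> A" using x by simp
      then have "p x = 0" using forest_supp[OF f] by simp
      then show ?thesis unfolding phi_def by simp
    qed
  next
    fix x assume x: "x \<in> A - {m}"
    have "p x \<in> insert 0 A" using forest_val[OF f] x by simp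
    then show "phi m p x \<in> insert 0 (A - {m})" unfolding phi_def by auto
  next
    fix x assume x: "x \<in> A - {m}"
    obtain k where k: "(p ^^ k) x = 0" using forest_reach[OF f] x by blast
    have "(phi m p ^^ k) x = 0" using iter_phi[OF p0 pm, of x k] x k by simp
    then show "\<exists>k. (phi m p ^^ k) x = 0" by blast
  qed
  show "valid (phi m p)"
  proof (rule validI)
    fix a b c assume "strict_ancestor (phi m p) a b" "strict_ancestor (phi m p) b c"
    then have "strict_ancestor p a b" "strict_ancestor p b c" using sa_phi[OF p0 pm] by auto
    then show "a < b \<and> a < c" using validD[OF v] by blast
  qed
qed

lemma psi_basic:
  assumes f: "forest (A - {m}) q"
  shows "psi q m = 0" "psi q 0 = 0" "phi m (psi q) = q"
proof -
  show pm: "psi q m = 0" unfolding psi_def using forest_supp[OF f, of m] by simp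
  show "psi q 0 = 0" unfolding psi_def using forest_supp[OF f, of 0] A0 by simp
  have qm: "q x \<noteq> m" for x
  proof (cases "x \<in> A - {m}")
    case True then show ?thesis using forest_val[OF f True] m0 by auto
  next
    case False then show ?thesis using forest_supp[OF f False] m0 by simp
  qed
  show "phi m (psi q) = q"
  proof
    fix x show "phi m (psi q) x = q x"
      unfolding phi_def psi_def using qm[of x] by auto
  qed
qed

lemma psi_to:
  assumes f: "forest (A - {m}) q" and v: "valid q"
  shows "tree A (psi q) \<and> valid (psi q) \<and> psi q m = 0"
proof (intro conjI)
  note b = psi_basic[OF f]
  show pm: "psi q m = 0" by (rule b(1))
  have fp: "forest A (psi q)"
  proof (rule forestI)
    fix x assume x: "x \<notin> A"
    then show "psi q x = 0" unfolding psi_def using forest_supp[OF f, of x] by simp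
  next
    fix x assume x: "x \<in> A"
    show "psi q x \<in> insert 0 A"
    proof (cases "x = m")
      case True then show ?thesis using pm by simp
    next
      case False
      then have "q x \<in> insert 0 (A - {m})" using forest_val[OF f] x by simp
      then show ?thesis unfolding psi_def using mA by auto
    qed
  next
    fix x assume x: "x \<in> A"
    show "\<exists>k. (psi q ^^ k) x = 0"
    proof (cases "x = m")
      case True
      have "(psi q ^^ 1) x = 0" using pm True by simp
      then show ?thesis by blast
    next
      case False
      then obtain k where k: "(q ^^ k) x = 0" using forest_reach[OF f] x by blast
      have "(phi m (psi q) ^^ k) x = (if (psi q ^^ k) x = m then 0 else (psi q ^^ k) x)"
        using iter_phi[OF b(2) b(1) False] .
      then have e: "(if (psi q ^^ k) x = m then 0 else (psi q ^^ k) x) = 0" using k b(3) by simp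
      show ?thesis
      proof (cases "(psi q ^^ k) x = m")
        case True
        then have "(psi q ^^ Suc k) x = 0" using pm by simp
        then show ?thesis by blast
      next
        case False then show ?thesis using e by auto
      qed
    qed
  qed
  show "tree A (psi q)"
  proof (rule treeI[OF fp mA pm])
    fix r assume r: "r \<in> A" "psi q r = 0"
    show "r = m"
    proof (rule ccontr)
      assume "r \<noteq> m"
      then have "r \<in> A - {m}" using r by simp
      then show False using r(2) m0 unfolding psi_def by (cases "q r = 0") auto
    qed
  qed
  have sa: "strict_ancestor q a b \<longleftrightarrow> strict_ancestor (psi q) a b \<and> a \<noteq> m" for a b
    using sa_phi[OF b(2) b(1), of a b] b(3) by simp
  show "valid (psi q)"
  proof (rule validI)
    fix a b c assume ab: "strict_ancestor (psi q) a b" and bc: "strict_ancestor (psi q) b c"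
    have bA: "b \<in> A" and cA: "c \<in> A" using sa_in[OF fp A0] ab bc by auto
    have bm: "b \<noteq> m" using sa_root[OF pm b(2)] ab by blast
    have cm: "c \<noteq> m" using sa_root[OF pm b(2)] bc by blast
    show "a < b \<and> a < c"
    proof (cases "a = m")
      case True
      then show ?thesis using mmin[OF bA] mmin[OF cA] bm cm by auto
    next
      case False
      then have "strict_ancestor q a b" "strict_ancestor q b c" using sa ab bc bm by auto
      then show ?thesis using validD[OF v] by blast
    qed
  qed
qed

lemma psi_phi:
  assumes t: "tree A p" and pm: "p m = 0"
  shows "psi (phi m p) = p"
proof
  fix x
  have f: "forest A p" using tree_forest[OF t] .
  show "psi (phi m p) x = p x"
  proof (cases "x \<in> A - {m}")
    case True
    then have "p x \<noteq> 0" using tree_root_unique[OF t mA pm, of x] by auto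
    then show ?thesis unfolding psi_def phi_def using True by auto
  next
    case False
    have "p x = 0"
    proof (cases "x = m")
      case True then show ?thesis using pm by simp
    next
      case False
      then have "x \<notin> A" using \<open>x \<notin> A - {m}\<close> by simp
      then show ?thesis using forest_supp[OF f] by simp
    qed
    have "phi m p x = 0" unfolding phi_def using \<open>p x = 0\<close> by simp
    then show ?thesis unfolding psi_def using False \<open>p x = 0\<close> by auto
  qed
qed

lemma card_P1: "card {p \<in> VT A. p m = 0} = card (VF (A - {m}))"
proof (rule bij_betw_same_card[of "phi m"])
  show "bij_betw (phi m) {p \<in> VT A. p m = 0} (VF (A - {m}))"
  proof (rule bij_betw_byWitness[where f'=psi])
    show "\<forall>a\<in>{p \<in> VT A. p m = 0}. psi (phi m a) = a"
      using psi_phi unfolding VT_def by blast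
    show "\<forall>a'\<in>VF (A - {m}). phi m (psi a') = a'"
      using psi_basic(3) unfolding VF_def by blast
    show "phi m ` {p \<in> VT A. p m = 0} \<subseteq> VF (A - {m})"
    proof
      fix y assume "y \<in> phi m ` {p \<in> VT A. p m = 0}"
      then obtain p where p: "tree A p" "valid p" "p m = 0" "y = phi m p" unfolding VT_def by blast
      then show "y \<in> VF (A - {m})" using phi_to[OF p(1-3)] unfolding VF_def by simp
    qed
    show "psi ` VF (A - {m}) \<subseteq> {p \<in> VT A. p m = 0}"
    proof
      fix y assume "y \<in> psi ` VF (A - {m})"
      then obtain q where q: "forest (A - {m}) q" "valid q" "y = psi q" unfolding VF_def by blast
      then show "y \<in> {p \<in> VT A. p m = 0}" using psi_to[OF q(1-2)] unfolding VT_def by simp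
    qed
  qed
qed

lemma kb:
  assumes t: "tree A p" and v: "valid p" and pm: "p m \<noteq> 0"
  shows "p m \<in> A" "p m \<noteq> m" "p (p m) = 0" "\<And>x. p x \<noteq> m"
proof -
  have f: "forest A p" using tree_forest[OF t] .
  have p0: "p 0 = 0" using forest_p0[OF f A0] .
  show wA: "p m \<in> A" using forest_val[OF f mA] pm by simp
  show "p m \<noteq> m"
  proof
    assume "p m = m"
    then have "strict_ancestor p m m" using sa_parent[of p m] pm by simp
    then show False using sa_irrefl[OF f A0] by blast
  qed
  show "p (p m) = 0"
  proof (rule ccontr)
    assume ne: "p (p m) \<noteq> 0"
    have 1: "strict_ancestor p (p (p m)) (p m)" using sa_parent[of p "p m"] ne by simp
    have 2: "strict_ancestor p (p m) m" using sa_parent[of p m] pm by simp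
    have "p (p m) < m" using validD[OF v 1 2] by simp
    moreover have "p (p m) \<in> A" using sa_in[OF f A0 1] by simp
    ultimately show False using mmin by fastforce
  qed
  fix x show "p x \<noteq> m"
  proof
    assume px: "p x = m"
    then have 1: "strict_ancestor p m x" using sa_parent[of p x] m0 by simp
    have 2: "strict_ancestor p (p m) m" using sa_parent[of p m] pm by simp
    have "p m < m" using validD[OF v 2 1] by simp
    then show False using mmin[OF wA] by simp
  qed
qed

definition rt :: "(nat \<Rightarrow> nat) \<Rightarrow> nat" where
  "rt q = (THE r. r \<in> A - {m} \<and> q r = 0)"

lemma rt:
  assumes "tree (A - {m}) q"
  shows "rt q \<in> A - {m} \<and> q (rt q) = 0"
proof -
  have "\<exists>!r. r \<in> A - {m} \<and> q r = 0" using assms unfolding tree_def by simp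
  then show ?thesis unfolding rt_def by (rule theI')
qed

lemma rt_eq:
  assumes "tree (A - {m}) q" "r \<in> A - {m}" "q r = 0"
  shows "rt q = r"
proof -
  have "\<exists>!r. r \<in> A - {m} \<and> q r = 0" using assms unfolding tree_def by simp
  then show ?thesis unfolding rt_def using assms(2,3) by (simp add: the1_equality)
qed

lemma phi2_to:
  assumes t: "tree A p" and v: "valid p" and pm: "p m \<noteq> 0"
  shows "tree (A - {m}) (p(m := 0)) \<and> valid (p(m := 0)) \<and> rt (p(m := 0)) = p m"
proof -
  note k = kb[OF t v pm]
  have f: "forest A p" using tree_forest[OF t] .
  have p0: "p 0 = 0" using forest_p0[OF f A0] .
  have it: "((p(m := 0)) ^^ j) x = (p ^^ j) x" if "x \<noteq> m" for x j
    using iter_upd_avoid[where q=p and m=m, OF k(4) that] .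
  have fq: "forest (A - {m}) (p(m := 0))"
  proof (rule forestI)
    fix x assume x: "x \<notin> A - {m}"
    show "(p(m := 0)) x = 0"
    proof (cases "x = m")
      case False then have "x \<notin> A" using x by simp
      then show ?thesis using forest_supp[OF f] False by simp
    qed simp
  next
    fix x assume x: "x \<in> A - {m}"
    have "p x \<in> insert 0 A" using forest_val[OF f] x by simp
    then show "(p(m := 0)) x \<in> insert 0 (A - {m})" using x k(4)[of x] by auto
  next
    fix x assume x: "x \<in> A - {m}"
    obtain j where "(p ^^ j) x = 0" using forest_reach[OF f] x by blast
    then have "((p(m := 0)) ^^ j) x = 0" using it x by simp
    then show "\<exists>j. ((p(m := 0)) ^^ j) x = 0" by blast
  qed
  have wA: "p m \<in> A - {m}" using k by simp
  have wq: "(p(m := 0)) (p m) = 0" using k by simp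
  have tq: "tree (A - {m}) (p(m := 0))"
  proof (rule treeI[OF fq wA wq])
    fix r assume r: "r \<in> A - {m}" "(p(m := 0)) r = 0"
    then have "p r = 0" by simp
    then show "r = p m" using tree_root_unique[OF t, of r "p m"] r k by simp
  qed
  have sa: "strict_ancestor (p(m := 0)) a b \<longleftrightarrow> strict_ancestor p a b \<and> b \<noteq> m" for a b
  proof (cases "b = m")
    case True
    have "(p(m := 0)) m = 0" "(p(m := 0)) 0 = 0" using p0 m0 by auto
    then show ?thesis using sa_root True by metis
  next
    case False then show ?thesis using sa_upd_avoid[where q=p and m=m, OF k(4) False] by simp
  qed
  have vq: "valid (p(m := 0))"
  proof (rule validI)
    fix a b c assume "strict_ancestor (p(m := 0)) a b" "strict_ancestor (p(m := 0)) b c"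
    then have "strict_ancestor p a b" "strict_ancestor p b c" using sa by auto
    then show "a < b \<and> a < c" using validD[OF v] by blast
  qed
  have "rt (p(m := 0)) = p m" using rt_eq[OF tq wA wq] .
  then show ?thesis using tq vq by simp
qed

lemma psi2_to:
  assumes t: "tree (A - {m}) q" and v: "valid q"
  shows "tree A (q(m := rt q)) \<and> valid (q(m := rt q)) \<and> (q(m := rt q)) m \<noteq> 0"
proof -
  have f: "forest (A - {m}) q" using tree_forest[OF t] .
  have q0: "q 0 = 0" using forest_p0[OF f A'0] .
  have qm: "q m = 0" using forest_supp[OF f] by simp
  obtain r where r: "r \<in> A - {m}" "q r = 0" "rt q = r" using rt[OF t] by blast
  have r0: "r \<noteq> 0" using r(1) A0 by (metis DiffD1)
  have nm: "q x \<noteq> m" for x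
  proof (cases "x \<in> A - {m}")
    case True then show ?thesis using forest_val[OF f True] m0 by auto
  next
    case False then show ?thesis using forest_supp[OF f False] m0 by simp
  qed
  let ?p = "q(m := r)"
  have it: "(?p ^^ j) x = (q ^^ j) x" if "x \<noteq> m" for x j
    using iter_upd_avoid[where q=q and m=m, OF nm that] .
  have fp: "forest A ?p"
  proof (rule forestI)
    fix x assume x: "x \<notin> A"
    then have "x \<noteq> m" using mA by auto
    then show "?p x = 0" using forest_supp[OF f] x by simp
  next
    fix x assume x: "x \<in> A"
    show "?p x \<in> insert 0 A"
    proof (cases "x = m")
      case True then show ?thesis using r by simp
    next
      case False
      then have "q x \<in> insert 0 (A - {m})" using forest_val[OF f] x by simp
      then show ?thesis using False by auto
    qed
  next
    fix x assume x: "x \<in> A"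
    show "\<exists>j. (?p ^^ j) x = 0"
    proof (cases "x = m")
      case True
      have "(?p ^^ 2) x = ?p (?p m)" using True by (simp add: numeral_2_eq_2)
      also have "\<dots> = 0" using r by auto
      finally show ?thesis by blast
    next
      case False
      then obtain j where "(q ^^ j) x = 0" using forest_reach[OF f] x by blast
      then show ?thesis using it[OF False] by metis
    qed
  qed
  have pr: "?p r = 0" using r by auto
  have rA: "r \<in> A" using r by simp
  have tp: "tree A ?p"
  proof (rule treeI[OF fp rA pr])
    fix r' assume r': "r' \<in> A" "?p r' = 0"
    have "r' \<noteq> m" using r' r0 by auto
    then have "q r' = 0" "r' \<in> A - {m}" using r' by auto
    then show "r' = r" using tree_root_unique[OF t] r by metis
  qed
  have p0: "?p 0 = 0" using q0 m0 by simp
  have vp: "valid ?p"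
  proof (rule validI)
    fix a b c assume ab: "strict_ancestor ?p a b" and bc: "strict_ancestor ?p b c"
    have cm: "c \<noteq> m"
    proof
      assume "c = m"
      then have "b = ?p m \<or> strict_ancestor ?p b (?p m)" using sa_step[OF bc] by simp
      then have "b = r" using sa_root[OF pr p0] by auto
      then show False using sa_root[OF pr p0] ab by blast
    qed
    then have bc': "strict_ancestor q b c" using bc sa_upd_avoid[where q=q and m=m, OF nm cm] by blast
    have "b \<in> A - {m}" using sa_in[OF f A'0 bc'] by simp
    then have "b \<noteq> m" by simp
    then have ab': "strict_ancestor q a b" using ab sa_upd_avoid[where q=q and m=m, OF nm \<open>b \<noteq> m\<close>] by blast
    show "a < b \<and> a < c" using validD[OF v ab' bc'] .
  qed
  show ?thesis using tp vp r r0 by simp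
qed

lemma card_P2: "card {p \<in> VT A. p m \<noteq> 0} = card (VT (A - {m}))"
proof (rule bij_betw_same_card[of "\<lambda>p. p(m := 0)"])
  show "bij_betw (\<lambda>p. p(m := 0)) {p \<in> VT A. p m \<noteq> 0} (VT (A - {m}))"
  proof (rule bij_betw_byWitness[where f'="\<lambda>q. q(m := rt q)"])
    show "\<forall>a\<in>{p \<in> VT A. p m \<noteq> 0}. (a(m := 0))(m := rt (a(m := 0))) = a"
    proof
      fix p assume "p \<in> {p \<in> VT A. p m \<noteq> 0}"
      then have p: "tree A p" "valid p" "p m \<noteq> 0" unfolding VT_def by auto
      have "rt (p(m := 0)) = p m" using phi2_to[OF p] by simp
      then show "(p(m := 0))(m := rt (p(m := 0))) = p" by simp
    qed
    show "\<forall>a'\<in>VT (A - {m}). (a'(m := rt a'))(m := 0) = a'"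
    proof
      fix q assume "q \<in> VT (A - {m})"
      then have "tree (A - {m}) q" unfolding VT_def by simp
      then have "q m = 0" using forest_supp[OF tree_forest] by simp
      then show "(q(m := rt q))(m := 0) = q" by auto
    qed
    show "(\<lambda>p. p(m := 0)) ` {p \<in> VT A. p m \<noteq> 0} \<subseteq> VT (A - {m})"
    proof
      fix y assume "y \<in> (\<lambda>p. p(m := 0)) ` {p \<in> VT A. p m \<noteq> 0}"
      then obtain p where p: "tree A p" "valid p" "p m \<noteq> 0" "y = p(m := 0)" unfolding VT_def by blast
      then show "y \<in> VT (A - {m})" using phi2_to[OF p(1-3)] unfolding VT_def by simp
    qed
    show "(\<lambda>q. q(m := rt q)) ` VT (A - {m}) \<subseteq> {p \<in> VT A. p m \<noteq> 0}"
    proof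
      fix y assume "y \<in> (\<lambda>q. q(m := rt q)) ` VT (A - {m})"
      then obtain q where q: "tree (A - {m}) q" "valid q" "y = q(m := rt q)" unfolding VT_def by blast
      then show "y \<in> {p \<in> VT A. p m \<noteq> 0}" using psi2_to[OF q(1-2)] unfolding VT_def by simp
    qed
  qed
qed

lemma rec_VT: "card (VT A) = card (VF (A - {m})) + card (VT (A - {m}))"
proof -
  have "VT A = {p \<in> VT A. p m = 0} \<union> {p \<in> VT A. p m \<noteq> 0}" by auto
  moreover have "finite (VT A)" using finite_VT[OF fin] .
  ultimately have "card (VT A) = card {p \<in> VT A. p m = 0} + card {p \<in> VT A. p m \<noteq> 0}"
    by (metis (no_types, lifting) card_Un_disjoint disjoint_iff finite_Un mem_Collect_eq)
  then show ?thesis using card_P1 card_P2 by simp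
qed

end



definition sp1 :: "nat set \<Rightarrow> (nat \<Rightarrow> nat) \<Rightarrow> nat \<Rightarrow> nat" where
  "sp1 C p = (\<lambda>v. if v \<in> C then p v else 0)"
definition sp2 :: "nat set \<Rightarrow> (nat \<Rightarrow> nat) \<Rightarrow> nat \<Rightarrow> nat" where
  "sp2 C p = (\<lambda>v. if v \<in> C then 0 else p v)"

locale splt =
  fixes p :: "nat \<Rightarrow> nat" and C :: "nat set"
  assumes p0: "p 0 = 0" and C0: "0 \<notin> C"
    and cl1: "\<And>v. v \<in> C \<Longrightarrow> p v \<in> insert 0 C"
    and cl2: "\<And>v. v \<notin> C \<Longrightarrow> p v \<notin> C"
begin

lemma iterC: "v \<in> C \<Longrightarrow> (p ^^ k) v \<in> insert 0 C \<and> (sp1 C p ^^ k) v = (p ^^ k) v"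
proof (induction k)
  case (Suc k)
  then have IH: "(p ^^ k) v \<in> insert 0 C" "(sp1 C p ^^ k) v = (p ^^ k) v" by auto
  have a: "(p ^^ Suc k) v = p ((p ^^ k) v)" by (rule fsuc)
  have b: "(sp1 C p ^^ Suc k) v = sp1 C p ((p ^^ k) v)" using IH(2) by (simp only: fsuc)
  show ?case
  proof (cases "(p ^^ k) v = 0")
    case True then show ?thesis using a b p0 C0 unfolding sp1_def by simp
  next
    case False
    then have x: "(p ^^ k) v \<in> C" using IH(1) by simp
    then show ?thesis using a b cl1[OF x] unfolding sp1_def by simp
  qed
qed simp

lemma iterNC: "v \<notin> C \<Longrightarrow> (p ^^ k) v \<notin> C \<and> (sp2 C p ^^ k) v = (p ^^ k) v"
proof (induction k)
  case (Suc k)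
  then have IH: "(p ^^ k) v \<notin> C" "(sp2 C p ^^ k) v = (p ^^ k) v" by auto
  have a: "(p ^^ Suc k) v = p ((p ^^ k) v)" by (rule fsuc)
  have b: "(sp2 C p ^^ Suc k) v = sp2 C p ((p ^^ k) v)" using IH(2) by (simp only: fsuc)
  show ?case using a b IH(1) cl2[OF IH(1)] unfolding sp2_def by simp
qed simp

lemma sp1_0: "sp1 C p 0 = 0" unfolding sp1_def using C0 by simp
lemma sp2_0: "sp2 C p 0 = 0" unfolding sp2_def using p0 by simp

lemma sa1: "strict_ancestor (sp1 C p) u v \<longleftrightarrow> v \<in> C \<and> strict_ancestor p u v"
proof (cases "v \<in> C")
  case True
  then show ?thesis unfolding strict_ancestor_def using iterC[OF True] by simp
next
  case False
  have "sp1 C p v = 0" unfolding sp1_def using False by simp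
  then show ?thesis using sa_root[of "sp1 C p" v u, OF _ sp1_0] False by blast
qed

lemma sa2: "strict_ancestor (sp2 C p) u v \<longleftrightarrow> v \<notin> C \<and> strict_ancestor p u v"
proof (cases "v \<in> C")
  case False
  then show ?thesis unfolding strict_ancestor_def using iterNC[OF False] by simp
next
  case True
  have "sp2 C p v = 0" unfolding sp2_def using True by simp
  then have "\<not> strict_ancestor (sp2 C p) u v" using sa_root[of "sp2 C p" v u, OF _ sp2_0] by blast
  then show ?thesis using True by blast
qed

lemma saC: "strict_ancestor p u v \<Longrightarrow> v \<in> C \<Longrightarrow> u \<in> C"
proof -
  assume s: "strict_ancestor p u v" and v: "v \<in> C"
  then obtain k where "(p ^^ k) v = u" "u \<noteq> 0" unfolding strict_ancestor_def by blast
  then show "u \<in> C" using iterC[OF v, of k] by simp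
qed

lemma saNC: "strict_ancestor p u v \<Longrightarrow> v \<notin> C \<Longrightarrow> u \<notin> C"
proof -
  assume s: "strict_ancestor p u v" and v: "v \<notin> C"
  then obtain k where "(p ^^ k) v = u" unfolding strict_ancestor_def by blast
  then show "u \<notin> C" using iterNC[OF v, of k] by simp
qed

lemma valid_split: "valid p \<longleftrightarrow> valid (sp1 C p) \<and> valid (sp2 C p)"
proof
  assume v: "valid p"
  show "valid (sp1 C p) \<and> valid (sp2 C p)"
  proof
    show "valid (sp1 C p)"
    proof (rule validI)
      fix a b c assume "strict_ancestor (sp1 C p) a b" "strict_ancestor (sp1 C p) b c"
      then show "a < b \<and> a < c" using sa1 validD[OF v] by blast
    qed
    show "valid (sp2 C p)"
    proof (rule validI)
      fix a b c assume "strict_ancestor (sp2 C p) a b" "strict_ancestor (sp2 C p) b c"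
      then show "a < b \<and> a < c" using sa2 validD[OF v] by blast
    qed
  qed
next
  assume "valid (sp1 C p) \<and> valid (sp2 C p)"
  then have v1: "valid (sp1 C p)" and v2: "valid (sp2 C p)" by auto
  show "valid p"
  proof (rule validI)
    fix a b c assume ab: "strict_ancestor p a b" and bc: "strict_ancestor p b c"
    show "a < b \<and> a < c"
    proof (cases "c \<in> C")
      case True
      then have "b \<in> C" using saC bc by blast
      then have "strict_ancestor (sp1 C p) a b" "strict_ancestor (sp1 C p) b c"
        using sa1 ab bc True by auto
      then show ?thesis using validD[OF v1] by blast
    next
      case False
      then have "b \<notin> C" using saNC bc by blast
      then have "strict_ancestor (sp2 C p) a b" "strict_ancestor (sp2 C p) b c"
        using sa2 ab bc False by auto
      then show ?thesis using validD[OF v2] by blast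
    qed
  qed
qed

lemma forest_split:
  assumes CB: "C \<subseteq> B"
  shows "forest B p \<longleftrightarrow> forest C (sp1 C p) \<and> forest (B - C) (sp2 C p)"
proof
  assume f: "forest B p"
  show "forest C (sp1 C p) \<and> forest (B - C) (sp2 C p)"
  proof
    show "forest C (sp1 C p)"
    proof (rule forestI)
      fix v assume "v \<notin> C" then show "sp1 C p v = 0" unfolding sp1_def by simp
    next
      fix v assume "v \<in> C" then show "sp1 C p v \<in> insert 0 C" unfolding sp1_def using cl1 by simp
    next
      fix v assume v: "v \<in> C"
      then obtain k where "(p ^^ k) v = 0" using forest_reach[OF f] CB by blast
      then show "\<exists>k. (sp1 C p ^^ k) v = 0" using iterC[OF v] by metis
    qed
    show "forest (B - C) (sp2 C p)"
    proof (rule forestI)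
      fix v assume v: "v \<notin> B - C"
      show "sp2 C p v = 0"
      proof (cases "v \<in> C")
        case False then have "v \<notin> B" using v by simp
        then show ?thesis unfolding sp2_def using forest_supp[OF f] by simp
      qed (simp add: sp2_def)
    next
      fix v assume v: "v \<in> B - C"
      then have "p v \<in> insert 0 B" "p v \<notin> C" using forest_val[OF f] cl2 by auto
      then show "sp2 C p v \<in> insert 0 (B - C)" unfolding sp2_def using v by simp
    next
      fix v assume v: "v \<in> B - C"
      then obtain k where "(p ^^ k) v = 0" using forest_reach[OF f] by blast
      then show "\<exists>k. (sp2 C p ^^ k) v = 0" using iterNC v by (metis DiffD2)
    qed
  qed
next
  assume "forest C (sp1 C p) \<and> forest (B - C) (sp2 C p)"
  then have f1: "forest C (sp1 C p)" and f2: "forest (B - C) (sp2 C p)" by auto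
  show "forest B p"
  proof (rule forestI)
    fix v assume v: "v \<notin> B"
    then have "v \<notin> C" "v \<notin> B - C" using CB by auto
    then have "sp2 C p v = 0" using forest_supp[OF f2] by blast
    then show "p v = 0" using \<open>v \<notin> C\<close> unfolding sp2_def by simp
  next
    fix v assume v: "v \<in> B"
    show "p v \<in> insert 0 B"
    proof (cases "v \<in> C")
      case True then show ?thesis using forest_val[OF f1 True] CB unfolding sp1_def by auto
    next
      case False then have "v \<in> B - C" using v by simp
      then show ?thesis using forest_val[OF f2] False unfolding sp2_def by auto
    qed
  next
    fix v assume v: "v \<in> B"
    show "\<exists>k. (p ^^ k) v = 0"
    proof (cases "v \<in> C")
      case True
      then obtain k where "(sp1 C p ^^ k) v = 0" using forest_reach[OF f1] by blast
      then show ?thesis using iterC[OF True] by metis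
    next
      case False then have "v \<in> B - C" using v by simp
      then obtain k where "(sp2 C p ^^ k) v = 0" using forest_reach[OF f2] by blast
      then show ?thesis using iterNC[OF False] by metis
    qed
  qed
qed

end

lemma reach_root:
  assumes t: "tree C q" and C0: "0 \<notin> C" and v: "v \<in> C" and r: "r \<in> C" "q r = 0"
  shows "\<exists>i. (q ^^ i) v = r"
proof -
  have f: "forest C q" using tree_forest[OF t] .
  have ex: "\<exists>k. (q ^^ k) v = 0" using forest_reach[OF f v] .
  define k0 where "k0 = (LEAST k. (q ^^ k) v = 0)"
  have k0: "(q ^^ k0) v = 0" unfolding k0_def using ex by (rule LeastI_ex)
  have "k0 \<noteq> 0" using k0 v C0 by (cases k0) auto
  then obtain j where j: "k0 = Suc j" by (cases k0) auto
  have "j < k0" using j by simp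
  then have x0: "(q ^^ j) v \<noteq> 0" unfolding k0_def by (rule not_less_Least)
  have "(q ^^ j) v \<in> insert 0 C" using forest_iter_in[OF f C0] v by simp
  then have xC: "(q ^^ j) v \<in> C" using x0 by simp
  have "q ((q ^^ j) v) = 0" using k0 j by simp
  then have "(q ^^ j) v = r" using tree_root_unique[OF t xC _ r] by simp
  then show ?thesis by blast
qed

definition gl :: "nat \<Rightarrow> nat set \<Rightarrow> (nat \<Rightarrow> nat) \<Rightarrow> (nat \<Rightarrow> nat) \<Rightarrow> nat \<Rightarrow> nat" where
  "gl b S q1 q2 = (\<lambda>v. if v \<in> insert b S then q1 v else q2 v)"

locale rec2 =
  fixes B :: "nat set" and b :: nat
  assumes fin: "finite B" and B0: "0 \<notin> B" and bB: "b \<in> B"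
begin

lemma b0: "b \<noteq> 0" using bB B0 by metis

definition comp :: "(nat \<Rightarrow> nat) \<Rightarrow> nat set" where
  "comp p = {v \<in> B. \<exists>i j. (p ^^ i) v = (p ^^ j) b \<and> (p ^^ j) b \<noteq> 0}"

lemma comp_sub: "comp p \<subseteq> B" unfolding comp_def by blast
lemma b_comp: "b \<in> comp p"
proof -
  have "(p ^^ 0) b = (p ^^ 0) b \<and> (p ^^ 0) b \<noteq> 0" using b0 by simp
  then show ?thesis unfolding comp_def using bB by blast
qed

lemma comp_splt:
  assumes f: "forest B p"
  shows "splt p (comp p)"
proof
  show p0: "p 0 = 0" using forest_p0[OF f B0] .
  show "0 \<notin> comp p" using comp_sub[of p] B0 by blast
  fix v
  show "p v \<in> insert 0 (comp p)" if v: "v \<in> comp p"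
  proof (cases "p v = 0")
    case False
    obtain i j where ij: "(p ^^ i) v = (p ^^ j) b" "(p ^^ j) b \<noteq> 0" using v unfolding comp_def by blast
    have vB: "v \<in> B" using v comp_sub[of p] by blast
    have pvB: "p v \<in> B" using forest_val[OF f vB] False by simp
    have "\<exists>i j. (p ^^ i) (p v) = (p ^^ j) b \<and> (p ^^ j) b \<noteq> 0"
    proof (cases i)
      case 0
      then have "(p ^^ 0) (p v) = (p ^^ Suc j) b" using ij by simp
      moreover have "(p ^^ Suc j) b \<noteq> 0" using False 0 ij by simp
      ultimately show ?thesis by blast
    next
      case (Suc i')
      then have "(p ^^ i') (p v) = (p ^^ j) b" using ij(1) by (simp only: iter_Suc2)
      then show ?thesis using ij(2) by blast
    qed
    then show ?thesis unfolding comp_def using pvB by blast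
  qed simp
  show "p v \<notin> comp p" if v: "v \<notin> comp p"
  proof
    assume pv: "p v \<in> comp p"
    then have "p v \<in> B" using comp_sub[of p] by blast
    then have "p v \<noteq> 0" using B0 by (cases "p v = 0") simp_all
    then have vB: "v \<in> B" using forest_supp[OF f, of v] by (cases "v \<in> B") simp_all
    obtain i j where ij: "(p ^^ i) (p v) = (p ^^ j) b" "(p ^^ j) b \<noteq> 0" using pv unfolding comp_def by blast
    then have "(p ^^ Suc i) v = (p ^^ j) b" by (simp only: iter_Suc2)
    then have "v \<in> comp p" unfolding comp_def using vB ij(2) by blast
    then show False using v by simp
  qed
qed

lemma comp_tree:
  assumes f: "forest B p"
  shows "tree (comp p) (sp1 (comp p) p)"
proof -
  interpret splt p "comp p" using comp_splt[OF f] .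
  have fc: "forest (comp p) (sp1 (comp p) p)" using forest_split[OF comp_sub] f by blast
  obtain k where k: "(p ^^ k) b = 0" using forest_reach[OF f bB] by blast
  then obtain k' where k': "k = Suc k'" using b0 by (cases k) auto
  have ex: "\<exists>j. (p ^^ Suc j) b = 0" using k k' by blast
  define j0 where "j0 = (LEAST j. (p ^^ Suc j) b = 0)"
  have j0: "(p ^^ Suc j0) b = 0" unfolding j0_def using ex by (rule LeastI_ex)
  define r where "r = (p ^^ j0) b"
  have r0: "r \<noteq> 0"
  proof (cases j0)
    case 0 then show ?thesis unfolding r_def using b0 by simp
  next
    case (Suc j1)
    then have "j1 < j0" by simp
    then have "(p ^^ Suc j1) b \<noteq> 0" unfolding j0_def by (rule not_less_Least)
    then show ?thesis unfolding r_def using Suc by simp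
  qed
  have "r \<in> insert 0 B" unfolding r_def using forest_iter_in[OF f B0] bB by simp
  then have rB: "r \<in> B" using r0 by simp
  have rc: "r \<in> comp p"
  proof -
    have "(p ^^ 0) r = (p ^^ j0) b \<and> (p ^^ j0) b \<noteq> 0" using r0 unfolding r_def by simp
    then show ?thesis unfolding comp_def using rB by blast
  qed
  have pr: "p r = 0" using j0 unfolding r_def by simp
  have sr: "sp1 (comp p) p r = 0" unfolding sp1_def using pr by simp
  show ?thesis
  proof (rule treeI[OF fc rc sr])
    fix r' assume r': "r' \<in> comp p" "sp1 (comp p) p r' = 0"
    then have pr': "p r' = 0" unfolding sp1_def by simp
    obtain i j where ij: "(p ^^ i) r' = (p ^^ j) b" "(p ^^ j) b \<noteq> 0" using r'(1) unfolding comp_def by blast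
    have i0: "i = 0"
    proof (rule ccontr)
      assume "i \<noteq> 0"
      then obtain i' where "i = Suc i'" by (cases i) auto
      then have "(p ^^ i) r' = (p ^^ i') (p r')" by (simp only: iter_Suc2)
      then have "(p ^^ i) r' = 0" using pr' iter_zero[of p, OF p0] by simp
      then show False using ij by simp
    qed
    then have r'j: "r' = (p ^^ j) b" using ij by simp
    have "(p ^^ Suc j) b = 0" using pr' r'j by simp
    then have le: "j0 \<le> j" unfolding j0_def by (rule Least_le)
    have "\<not> j0 < j"
    proof
      assume "j0 < j"
      then have "j = (j - Suc j0) + Suc j0" by simp
      then have "(p ^^ j) b = (p ^^ (j - Suc j0)) ((p ^^ Suc j0) b)" by (metis iter_add)
      then have "(p ^^ j) b = 0" using j0 iter_zero[of p, OF p0] by simp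
      then show False using ij i0 by simp
    qed
    then have "j = j0" using le by simp
    then show "r' = r" unfolding r_def using r'j by simp
  qed
qed

lemma gl_props:
  assumes S: "S \<subseteq> B - {b}" and t1: "tree (insert b S) q1" and f2: "forest (B - insert b S) q2"
  shows "splt (gl b S q1 q2) (insert b S)" "sp1 (insert b S) (gl b S q1 q2) = q1"
    "sp2 (insert b S) (gl b S q1 q2) = q2" "forest B (gl b S q1 q2)"
    "comp (gl b S q1 q2) = insert b S"
proof -
  define C where "C = insert b S"
  define g where "g = gl b S q1 q2"
  have CB: "C \<subseteq> B" unfolding C_def using S bB by auto
  have C0: "0 \<notin> C" using CB B0 by blast
  have f1: "forest C q1" using tree_forest t1 unfolding C_def by blast
  have f2': "forest (B - C) q2" using f2 unfolding C_def .
  have gC: "g v = q1 v" if "v \<in> C" for v unfolding g_def gl_def using that C_def by simp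
  have gNC: "g v = q2 v" if "v \<notin> C" for v unfolding g_def gl_def using that C_def by simp
  have sp: "splt g C"
  proof
    have "0 \<notin> C" by (rule C0)
    then show "g 0 = 0" using gNC forest_supp[OF f2', of 0] B0 by simp
    show "0 \<notin> C" by (rule C0)
    fix v
    show "g v \<in> insert 0 C" if "v \<in> C" using gC[OF that] forest_val[OF f1 that] by simp
    show "g v \<notin> C" if v: "v \<notin> C"
    proof (cases "v \<in> B")
      case True
      then have "q2 v \<in> insert 0 (B - C)" using forest_val[OF f2'] v by simp
      then show ?thesis using gNC[OF v] C0 by auto
    next
      case False
      then have "q2 v = 0" using forest_supp[OF f2'] by simp
      then show ?thesis using gNC[OF v] C0 by simp
    qed
  qed
  interpret splt g C by (rule sp)
  have s1: "sp1 C g = q1"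
  proof
    fix v show "sp1 C g v = q1 v"
    proof (cases "v \<in> C")
      case True then show ?thesis unfolding sp1_def using gC by simp
    next
      case False then show ?thesis unfolding sp1_def using forest_supp[OF f1 False] by simp
    qed
  qed
  have s2: "sp2 C g = q2"
  proof
    fix v show "sp2 C g v = q2 v"
    proof (cases "v \<in> C")
      case True
      then have "v \<notin> B - C" by simp
      then show ?thesis unfolding sp2_def using forest_supp[OF f2'] True by simp
    next
      case False then show ?thesis unfolding sp2_def using gNC by simp
    qed
  qed
  have fg: "forest B g" using forest_split[OF CB] s1 s2 f1 f2' by simp
  have "comp g = C"
  proof
    show "comp g \<subseteq> C"
    proof
      fix v assume v: "v \<in> comp g"
      obtain i j where ij: "(g ^^ i) v = (g ^^ j) b" "(g ^^ j) b \<noteq> 0" using v unfolding comp_def by blast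
      have bC: "b \<in> C" unfolding C_def by simp
      have "(g ^^ j) b \<in> C" using iterC[OF bC, of j] ij(2) by simp
      then show "v \<in> C" using iterNC[of v i] ij(1) by auto
    qed
    show "C \<subseteq> comp g"
    proof
      fix v assume v: "v \<in> C"
      obtain r where r: "r \<in> C" "q1 r = 0" using t1 unfolding tree_def C_def by blast
      have C0': "0 \<notin> C" by (rule C0)
      have t1': "tree C q1" using t1 unfolding C_def .
      obtain i where i: "(q1 ^^ i) v = r" using reach_root[OF t1' C0' v r] by blast
      have bC: "b \<in> C" unfolding C_def by simp
      obtain j where j: "(q1 ^^ j) b = r" using reach_root[OF t1' C0' bC r] by blast
      have "(g ^^ i) v = r" using iterC[OF v, of i] i s1 by simp
      moreover have "(g ^^ j) b = r" using iterC[OF bC, of j] j s1 by simp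
      moreover have "r \<noteq> 0" using r C0 by (cases "r = 0") simp_all
      moreover have "v \<in> B" using v CB by blast
      ultimately have "v \<in> B \<and> (g ^^ i) v = (g ^^ j) b \<and> (g ^^ j) b \<noteq> 0" by simp
      then show "v \<in> comp g" unfolding comp_def by blast
    qed
  qed
  then show "splt (gl b S q1 q2) (insert b S)" "sp1 (insert b S) (gl b S q1 q2) = q1"
    "sp2 (insert b S) (gl b S q1 q2) = q2" "forest B (gl b S q1 q2)"
    "comp (gl b S q1 q2) = insert b S"
    using sp s1 s2 fg unfolding C_def g_def by simp_all
qed

definition Fm :: "(nat \<Rightarrow> nat) \<Rightarrow> nat set \<times> (nat \<Rightarrow> nat) \<times> (nat \<Rightarrow> nat)" where
  "Fm p = (comp p - {b}, sp1 (comp p) p, sp2 (comp p) p)"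
definition Gm :: "nat set \<times> (nat \<Rightarrow> nat) \<times> (nat \<Rightarrow> nat) \<Rightarrow> nat \<Rightarrow> nat" where
  "Gm x = gl b (fst x) (fst (snd x)) (snd (snd x))"

lemma rec_VF:
  "card (VF B) = (\<Sum>S \<in> Pow (B - {b}). card (VT (insert b S)) * card (VF (B - insert b S)))"
proof -
  define T where "T = Sigma (Pow (B - {b})) (\<lambda>S. VT (insert b S) \<times> VF (B - insert b S))"
  have bij: "bij_betw Fm (VF B) T"
  proof (rule bij_betw_byWitness[where f'=Gm])
    show "\<forall>p\<in>VF B. Gm (Fm p) = p"
    proof
      fix p assume "p \<in> VF B"
      have e: "insert b (comp p - {b}) = comp p" using b_comp by auto
      show "Gm (Fm p) = p"
      proof
        fix v show "Gm (Fm p) v = p v"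
          unfolding Gm_def Fm_def gl_def sp1_def sp2_def using e by simp
      qed
    qed
    show "\<forall>x\<in>T. Fm (Gm x) = x"
    proof
      fix x assume "x \<in> T"
      then obtain S q1 q2 where x: "x = (S, q1, q2)" "S \<subseteq> B - {b}" "tree (insert b S) q1"
        "forest (B - insert b S) q2" unfolding T_def VT_def VF_def by auto
      note g = gl_props[OF x(2-4)]
      have "b \<notin> S" using x(2) by blast
      then have "comp (gl b S q1 q2) - {b} = S" using g(5) by simp
      then show "Fm (Gm x) = x" unfolding Fm_def Gm_def using g x(1) by simp
    qed
    show "Fm ` VF B \<subseteq> T"
    proof
      fix y assume "y \<in> Fm ` VF B"
      then obtain p where p: "forest B p" "valid p" "y = Fm p" unfolding VF_def by blast
      interpret splt p "comp p" using comp_splt[OF p(1)] .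
      have e: "insert b (comp p - {b}) = comp p" using b_comp by auto
      have 1: "comp p - {b} \<in> Pow (B - {b})" using comp_sub by auto
      have 2: "sp1 (comp p) p \<in> VT (comp p)"
        using comp_tree[OF p(1)] valid_split p(2) unfolding VT_def by simp
      have 3: "sp2 (comp p) p \<in> VF (B - comp p)"
        using forest_split[OF comp_sub] p(1) valid_split p(2) unfolding VF_def by simp
      show "y \<in> T" unfolding T_def p(3) Fm_def using 1 2 3 e by simp
    qed
    show "Gm ` T \<subseteq> VF B"
    proof
      fix y assume "y \<in> Gm ` T"
      then obtain S q1 q2 where x: "y = Gm (S, q1, q2)" "S \<subseteq> B - {b}" "tree (insert b S) q1"
        "forest (B - insert b S) q2" "valid q1" "valid q2" unfolding T_def VT_def VF_def by auto
      note g = gl_props[OF x(2-4)]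
      interpret splt "gl b S q1 q2" "insert b S" by (rule g(1))
      have "valid (gl b S q1 q2)" using valid_split g(2,3) x(5,6) by simp
      then show "y \<in> VF B" unfolding VF_def x(1) Gm_def using g(4) by simp
    qed
  qed
  have "card (VF B) = card T" using bij_betw_same_card[OF bij] .
  also have "\<dots> = (\<Sum>S \<in> Pow (B - {b}). card (VT (insert b S) \<times> VF (B - insert b S)))"
    unfolding T_def
  proof (rule card_SigmaI)
    show "finite (Pow (B - {b}))" using fin by simp
    show "\<forall>S\<in>Pow (B - {b}). finite (VT (insert b S) \<times> VF (B - insert b S))"
    proof
      fix S assume "S \<in> Pow (B - {b})"
      then have "finite S" using fin finite_subset by blast
      then show "finite (VT (insert b S) \<times> VF (B - insert b S))"
        using finite_VT finite_VF fin by simp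
    qed
  qed
  also have "\<dots> = (\<Sum>S \<in> Pow (B - {b}). card (VT (insert b S)) * card (VF (B - insert b S)))"
    by (simp add: card_cartesian_product)
  finally show ?thesis .
qed

end



lemma t_rec: "t_count (Suc n) = f_count n + t_count n"
proof -
  define A where "A = {1..Suc n}"
  interpret rec1 A 1 unfolding A_def by unfold_locales auto
  have e: "A - {1} = {2..Suc n}" unfolding A_def by auto
  have c: "card (A - {1}) = n" unfolding e by simp
  have f: "finite (A - {1})" "0 \<notin> A - {1}" unfolding e by auto
  have "card (VT A) = card (VF (A - {1})) + card (VT (A - {1}))" by (rule rec_VT)
  also have "\<dots> = f_count n + t_count n" using VT_card[OF f] VF_card[OF f] c by simp
  finally show ?thesis using t_count_VT unfolding A_def by simp
qed

lemma sum_pow_card: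
  assumes "finite D"
  shows "(\<Sum>S\<in>Pow D. g (card S)) = (\<Sum>k=0..card D. (card D choose k) * g k)"
proof -
  have "(\<Sum>S\<in>Pow D. g (card S)) = (\<Sum>k\<in>{0..card D}. \<Sum>S\<in>{S \<in> Pow D. card S = k}. g (card S))"
  proof (rule sum.group[symmetric])
    show "finite (Pow D)" using assms by simp
    show "finite {0..card D}" by simp
    show "card ` Pow D \<subseteq> {0..card D}" using assms card_mono by fastforce
  qed
  also have "\<dots> = (\<Sum>k\<in>{0..card D}. (card D choose k) * g k)"
  proof (rule sum.cong[OF refl])
    fix k assume "k \<in> {0..card D}"
    have "(\<Sum>S\<in>{S \<in> Pow D. card S = k}. g (card S)) = (\<Sum>S\<in>{S \<in> Pow D. card S = k}. g k)"
      by (rule sum.cong) auto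
    also have "\<dots> = card {S \<in> Pow D. card S = k} * g k" by simp
    also have "card {S \<in> Pow D. card S = k} = card D choose k"
    proof -
      have "{S \<in> Pow D. card S = k} = {S. S \<subseteq> D \<and> card S = k}" by auto
      then show ?thesis using n_subsets[OF assms, of k] by simp
    qed
    finally show "(\<Sum>S\<in>{S \<in> Pow D. card S = k}. g (card S)) = (card D choose k) * g k" .
  qed
  finally show ?thesis .
qed

lemma f_rec: "f_count (Suc n) = (\<Sum>k=0..n. (n choose k) * (t_count (Suc k) * f_count (n - k)))"
proof -
  define B where "B = {1..Suc n}"
  interpret rec2 B 1 unfolding B_def by unfold_locales auto
  have D: "B - {1} = {2..Suc n}" unfolding B_def by auto
  have cD: "card (B - {1}) = n" unfolding D by simp
  have fD: "finite (B - {1})" unfolding D by simp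
  have trm: "card (VT (insert 1 S)) * card (VF (B - insert 1 S)) = t_count (Suc (card S)) * f_count (n - card S)"
    if S: "S \<in> Pow (B - {1})" for S
  proof -
    have SD: "S \<subseteq> B - {1}" using S by simp
    have fS: "finite S" using finite_subset[OF SD fD] .
    have 1: "finite (insert 1 S)" "0 \<notin> insert 1 S" using fS SD unfolding D by auto
    have "1 \<notin> S" using SD by blast
    then have c1: "card (insert 1 S) = Suc (card S)" using fS by simp
    have e2: "B - insert 1 S = (B - {1}) - S" by auto
    have 2: "finite (B - insert 1 S)" "0 \<notin> B - insert 1 S" unfolding e2 using fD unfolding D by auto
    have c2: "card (B - insert 1 S) = n - card S" unfolding e2 using card_Diff_subset[OF fS SD] cD by simp
    show ?thesis using VT_card[OF 1] VF_card[OF 2] c1 c2 by simp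
  qed
  have "card (VF B) = (\<Sum>S \<in> Pow (B - {1}). card (VT (insert 1 S)) * card (VF (B - insert 1 S)))"
    by (rule rec_VF)
  also have "\<dots> = (\<Sum>S \<in> Pow (B - {1}). t_count (Suc (card S)) * f_count (n - card S))"
    by (rule sum.cong[OF refl]) (rule trm)
  also have "\<dots> = (\<Sum>k=0..n. (n choose k) * (t_count (Suc k) * f_count (n - k)))"
    using sum_pow_card[OF fD, of "\<lambda>k. t_count (Suc k) * f_count (n - k)"] cD by simp
  finally show ?thesis unfolding f_count_def B_def by simp
qed

lemma t0: "t_count 0 = 0"
proof -
  have "VT {1..0} = {}" unfolding VT_def tree_def by auto
  then show ?thesis using t_count_VT by simp
qed

lemma f0: "f_count 0 = 1"
proof -
  have "VF {} = {\<lambda>_. 0}"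
  proof
    show "VF {} \<subseteq> {\<lambda>_. 0}"
    proof
      fix p assume "p \<in> VF {}"
      then have "forest {} p" unfolding VF_def by simp
      then have "p = (\<lambda>_. 0)" using forest_supp by blast
      then show "p \<in> {\<lambda>_. 0}" by simp
    qed
    have f: "forest {} (\<lambda>_. 0)" by (rule forestI) auto
    have v: "valid (\<lambda>_. 0)"
    proof (rule validI)
      fix a b c assume "strict_ancestor (\<lambda>_. 0::nat) a b"
      then show "a < b \<and> a < c" using sa_root[of "\<lambda>_. 0::nat" b a] by simp
    qed
    show "{\<lambda>_. 0} \<subseteq> VF {}" using f v unfolding VF_def by simp
  qed
  then show ?thesis unfolding f_count_def by simp
qed

definition F_egf :: "real fps" where
  "F_egf = Abs_fps (\<lambda>n. of_nat (f_count n) / fact n)"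

lemma fact_lem: "of_nat (n + 1) * (x / fact (Suc n)) = (x::real) / fact n"
proof -
  define c :: real where "c = of_nat (n + 1)"
  have c0: "c \<noteq> 0" unfolding c_def by simp
  have 1: "fact (Suc n) = c * (fact n :: real)" unfolding c_def by (simp add: fact_Suc)
  have "c * (x / fact (Suc n)) = (c * x) / (c * fact n)" unfolding 1 by (rule times_divide_eq_right)
  also have "\<dots> = x / fact n" by (rule nonzero_mult_divide_mult_cancel_left[OF c0])
  finally show ?thesis unfolding c_def .
qed

lemma deriv_T: "fps_deriv T_egf = T_egf + F_egf"
proof (rule fps_ext)
  fix n
  have "(fps_nth (fps_deriv T_egf) n) = of_nat (n + 1) * (of_nat (t_count (Suc n)) / fact (Suc n))"
    unfolding T_egf_def by simp
  also have "\<dots> = of_nat (t_count (Suc n)) / fact n" by (rule fact_lem)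
  also have "\<dots> = (of_nat (t_count n) + of_nat (f_count n)) / fact n" using t_rec by simp
  finally show "(fps_nth (fps_deriv T_egf) n) = (fps_nth (T_egf + F_egf) n)"
    unfolding T_egf_def F_egf_def by (simp add: add_divide_distrib)
qed

lemma deriv_F: "fps_deriv F_egf = fps_deriv T_egf * F_egf"
proof (rule fps_ext)
  fix n
  have "(fps_nth (fps_deriv F_egf) n) = of_nat (n + 1) * (of_nat (f_count (Suc n)) / fact (Suc n))"
    unfolding F_egf_def by simp
  also have "\<dots> = of_nat (f_count (Suc n)) / fact n" by (rule fact_lem)
  also have "\<dots> = (\<Sum>k=0..n. of_nat (n choose k) * (of_nat (t_count (Suc k)) * of_nat (f_count (n - k)))) / fact n"
    using f_rec by simp
  also have "\<dots> = (\<Sum>k=0..n. of_nat (t_count (Suc k)) / fact k * (of_nat (f_count (n - k)) / fact (n - k)))"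
    unfolding sum_divide_distrib
  proof (rule sum.cong[OF refl])
    fix k assume k: "k \<in> {0..n}"
    then have kn: "k \<le> n" by simp
    have "(of_nat (n choose k) :: real) = fact n / (fact k * fact (n - k))" using binomial_fact[OF kn] .
    then show "of_nat (n choose k) * (of_nat (t_count (Suc k)) * of_nat (f_count (n - k))) / (fact n :: real) =
      of_nat (t_count (Suc k)) / fact k * (of_nat (f_count (n - k)) / fact (n - k))"
      by (simp add: field_simps)
  qed
  also have "\<dots> = (fps_nth (fps_deriv T_egf * F_egf) n)"
  proof -
    have "(fps_nth (fps_deriv T_egf * F_egf) n) = (\<Sum>i=0..n. (fps_nth (fps_deriv T_egf) i) * (fps_nth F_egf (n - i)))"
      by (rule fps_mult_nth)
    also have "\<dots> = (\<Sum>i=0..n. of_nat (t_count (Suc i)) / fact i * (of_nat (f_count (n - i)) / fact (n - i)))"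
    proof (rule sum.cong[OF refl])
      fix i
      have "(fps_nth (fps_deriv T_egf) i) = of_nat (i + 1) * (of_nat (t_count (Suc i)) / fact (Suc i))"
        unfolding T_egf_def by simp
      then have "(fps_nth (fps_deriv T_egf) i) = of_nat (t_count (Suc i)) / fact i"
        using fact_lem by simp
      then show "(fps_nth (fps_deriv T_egf) i) * (fps_nth F_egf (n - i)) =
        of_nat (t_count (Suc i)) / fact i * (of_nat (f_count (n - i)) / fact (n - i))"
        unfolding F_egf_def by simp
    qed
    finally show ?thesis by simp
  qed
  finally show "(fps_nth (fps_deriv F_egf) n) = (fps_nth (fps_deriv T_egf * F_egf) n)" .
qed

lemma ode_unique:
  fixes G H D :: "real fps"
  assumes "fps_deriv G = D * G" "fps_deriv H = D * H" "(fps_nth G 0) = (fps_nth H 0)"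
  shows "G = H"
proof -
  have "\<forall>m\<le>n. (fps_nth G m) = (fps_nth H m)" for n
  proof (induction n)
    case 0 then show ?case using assms(3) by simp
  next
    case (Suc n)
    have "of_nat (n + 1) * (fps_nth G (n + 1)) = (fps_nth (fps_deriv G) n)" by simp
    also have "\<dots> = (\<Sum>i=0..n. (fps_nth D i) * (fps_nth G (n - i)))" by (simp only: assms(1) fps_mult_nth)
    also have "\<dots> = (\<Sum>i=0..n. (fps_nth D i) * (fps_nth H (n - i)))"
      by (rule sum.cong[OF refl]) (use Suc in simp)
    also have "\<dots> = (fps_nth (fps_deriv H) n)" by (simp only: assms(2) fps_mult_nth)
    also have "\<dots> = of_nat (n + 1) * (fps_nth H (n + 1))" by simp
    finally have "fps_nth G (Suc n) = fps_nth H (Suc n)" by simp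
    then show ?case using Suc by (auto simp: le_Suc_eq)
  qed
  then show ?thesis by (intro fps_ext) blast
qed

theorem proposition5p12:
  shows "fps_deriv T_egf = T_egf + (fps_exp (1::real) oo T_egf) \<and> fps_nth T_egf 0 = 0"
proof -
  have T0: "(fps_nth T_egf 0) = 0" unfolding T_egf_def using t0 by simp
  define E where "E = fps_exp (1::real) oo T_egf"
  have dE: "fps_deriv E = fps_deriv T_egf * E"
    unfolding E_def using fps_compose_deriv[OF T0, of "fps_exp 1"] by (simp add: mult.commute)
  have E0: "(fps_nth E 0) = 1" unfolding E_def by simp
  have F0: "(fps_nth F_egf 0) = 1" unfolding F_egf_def using f0 by simp
  have "F_egf = E" using ode_unique[OF deriv_F dE] E0 F0 by simp
  then show ?thesis using deriv_T T0 unfolding E_def by simp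
qed

end
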